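(* For every graph $G$, $\operatorname{reg}(G)\le \Delta(G)\,\operatorname{im}(G)$, where $\Delta(G)$ is the maximum degree.
   Context: $\operatorname{reg}(G)=\max\{j\ge0:\widetilde H_{j-1}(\operatorname{Ind}(G[S]);\Bbbk)\neq0\text{ for some }S\subseteq V(G)\}$ over a field $\Bbbk$ ($\operatorname{Ind}$ = independence complex). $\operatorname{im}(G)$ is the induced matching number. *)

theory Defs
  imports Main
begin

definition simple_graph :: "'a set \<Rightarrow> 'a set set \<Rightarrow> bool" where
  "simple_graph V E \<longleftrightarrow> finite V \<and> (\<forall>e\<in>E. e \<subseteq> V \<and> card e = 2)"

definition degree :: "'a set set \<Rightarrow> 'a \<Rightarrow> nat" where
  "degree E v = card {u. {u, v} \<in> E}"

definition max_degree :: "'a set \<Rightarrow> 'a set set \<Rightarrow> nat" where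
  "max_degree V E = (if V = {} then 0 else Max (degree E ` V))"

text \<open>Induced matching: pairwise disjoint edges such that every edge of G
  inside their union is one of them (no edge of G joins two of them).\<close>
definition induced_matching :: "'a set set \<Rightarrow> 'a set set \<Rightarrow> bool" where
  "induced_matching E M \<longleftrightarrow> M \<subseteq> E \<and>
     (\<forall>e\<in>M. \<forall>f\<in>M. e \<noteq> f \<longrightarrow> e \<inter> f = {}) \<and>
     (\<forall>e\<in>E. e \<subseteq> \<Union>M \<longrightarrow> e \<in> M)"

definition induced_matching_number :: "'a set set \<Rightarrow> nat" where
  "induced_matching_number E = Max (card ` {M. induced_matching E M})"

text \<open>Independence complex of the induced subgraph G[S] (includes the empty face).\<close>
definition ind_complex :: "'a set set \<Rightarrow> 'a set \<Rightarrow> 'a set set" where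
  "ind_complex E S = {\<sigma>. \<sigma> \<subseteq> S \<and> (\<forall>e\<in>E. \<not> e \<subseteq> \<sigma>)}"

text \<open>Augmented simplicial chains over a field: a d-chain is a function on faces
  supported on faces of K with d+1 vertices (the empty face lives in degree -1).
  Simplices are oriented by the linear order of the vertices.\<close>
definition chains :: "'a set set \<Rightarrow> int \<Rightarrow> ('a set \<Rightarrow> 'k::field) set" where
  "chains K d = {c. \<forall>\<sigma>. c \<sigma> \<noteq> 0 \<longrightarrow> \<sigma> \<in> K \<and> int (card \<sigma>) = d + 1}"

definition bdry :: "'a::linorder set set \<Rightarrow> ('a set \<Rightarrow> 'k::field) \<Rightarrow> ('a set \<Rightarrow> 'k)" where
  "bdry K c \<tau> = (if \<tau> \<in> K then
      (\<Sum>v\<in>\<Union>K - \<tau>. if insert v \<tau> \<in> K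
          then (-1) ^ card {u\<in>\<tau>. u < v} * c (insert v \<tau>) else 0)
    else 0)"

definition red_homology_nonzero :: "'k::field itself \<Rightarrow> 'a::linorder set set \<Rightarrow> int \<Rightarrow> bool" where
  "red_homology_nonzero _ K d \<longleftrightarrow>
     (\<exists>z\<in>(chains K d :: ('a set \<Rightarrow> 'k) set). bdry K z = (\<lambda>_. 0) \<and>
        (\<forall>b\<in>(chains K (d + 1) :: ('a set \<Rightarrow> 'k) set). bdry K b \<noteq> z))"

definition reg :: "'k::field itself \<Rightarrow> 'a::linorder set \<Rightarrow> 'a set set \<Rightarrow> nat" where
  "reg k V E = Max {j. \<exists>S\<subseteq>V. red_homology_nonzero k (ind_complex E S) (int j - 1)}"

end

theory Submission
  imports Defs
begin


definition eps :: "'a::linorder \<Rightarrow> 'a set \<Rightarrow> 'k::field" where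
  "eps w \<tau> = (-1) ^ card {u\<in>\<tau>. u < w}"

definition cone :: "'a::linorder \<Rightarrow> ('a set \<Rightarrow> 'k::field) \<Rightarrow> 'a set \<Rightarrow> 'k" where
  "cone w b \<sigma> = (if w \<in> \<sigma> then eps w (\<sigma> - {w}) * b (\<sigma> - {w}) else 0)"

lemma eps_sq: "eps w \<tau> * eps w \<tau> = (1::'k::field)"
  unfolding eps_def by (simp add: power_add[symmetric] flip: mult_2)

lemma bdry_alt: "bdry K c \<tau> = (if \<tau> \<in> K then
      (\<Sum>v\<in>\<Union>K - \<tau>. if insert v \<tau> \<in> K then eps v \<tau> * c (insert v \<tau>) else 0) else 0)"
  unfolding bdry_def eps_def by simp

lemma bdry_zero: "bdry K (\<lambda>_. 0::'k::field) = (\<lambda>_. 0)"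
  by (rule ext) (simp add: bdry_def if_distrib cong: if_cong)

lemma bdry_add: "bdry K (\<lambda>\<sigma>. f \<sigma> + g \<sigma>) = (\<lambda>\<tau>. bdry K f \<tau> + bdry K (g::_ \<Rightarrow> 'k::field) \<tau>)"
  apply (rule ext)
  apply (simp add: bdry_def sum.distrib[symmetric])
  apply (intro impI sum.cong) apply (auto simp: ring_distribs)
  done

lemma bdry_minus: "bdry K (\<lambda>\<sigma>. - f \<sigma>) = (\<lambda>\<tau>. - bdry K (f::_ \<Rightarrow> 'k::field) \<tau>)"
  apply (rule ext)
  apply (simp add: bdry_def sum_negf[symmetric])
  apply (intro impI sum.cong) apply auto
  done

lemma bdry_diff: "bdry K (\<lambda>\<sigma>. f \<sigma> - g \<sigma>) = (\<lambda>\<tau>. bdry K f \<tau> - bdry K (g::_ \<Rightarrow> 'k::field) \<tau>)"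
  using bdry_add[of K f "\<lambda>\<sigma>. - g \<sigma>"] bdry_minus[of K g] by simp

lemma bdry_restrict:
  assumes "K1 \<subseteq> K2" "finite (\<Union>K2)" "\<And>v \<tau>. insert v \<tau> \<in> K1 \<Longrightarrow> \<tau> \<in> K1"
    "\<And>\<sigma>. c \<sigma> \<noteq> 0 \<Longrightarrow> \<sigma> \<in> K1"
  shows "bdry K2 c = bdry K1 (c::_ \<Rightarrow> 'k::field)"
proof (rule ext)
  fix \<tau>
  show "bdry K2 c \<tau> = bdry K1 c \<tau>"
  proof (cases "\<tau> \<in> K1")
    case True
    then have t2: "\<tau> \<in> K2" using assms(1) by blast
    have "(\<Sum>v\<in>\<Union>K2 - \<tau>. if insert v \<tau> \<in> K2 then eps v \<tau> * c (insert v \<tau>) else 0)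
        = (\<Sum>v\<in>\<Union>K1 - \<tau>. if insert v \<tau> \<in> K1 then eps v \<tau> * c (insert v \<tau>) else 0)"
    proof (rule sum.mono_neutral_cong_right)
      show "finite (\<Union>K2 - \<tau>)" using assms(2) by blast
      show "\<Union>K1 - \<tau> \<subseteq> \<Union>K2 - \<tau>" using assms(1) by blast
      show "\<forall>i\<in>\<Union>K2 - \<tau> - (\<Union>K1 - \<tau>). (if insert i \<tau> \<in> K2 then eps i \<tau> * c (insert i \<tau>) else 0) = 0"
        using assms(4) by (metis (no_types, lifting) DiffE DiffI Union_iff insertI1 mult_zero_right)
      show "\<And>x. x \<in> \<Union>K1 - \<tau> \<Longrightarrow> (if insert x \<tau> \<in> K2 then eps x \<tau> * c (insert x \<tau>) else 0) =
         (if insert x \<tau> \<in> K1 then eps x \<tau> * c (insert x \<tau>) else 0)"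
        using assms(1,4) by auto
    qed
    then show ?thesis using True t2 by (simp add: bdry_alt)
  next
    case False
    have "(if insert v \<tau> \<in> K2 then eps v \<tau> * c (insert v \<tau>) else (0::'k)) = 0" for v
      using assms(3,4) False by auto
    then show ?thesis using False by (simp add: bdry_alt)
  qed
qed



definition Ncl :: "'a set set \<Rightarrow> 'a \<Rightarrow> 'a set" where
  "Ncl E w = insert w {x. {x, w} \<in> E}"

lemma ind_sub: "\<sigma> \<in> ind_complex E A \<Longrightarrow> \<sigma> \<subseteq> A"
  by (simp add: ind_complex_def)

lemma ind_down: "\<sigma> \<in> ind_complex E A \<Longrightarrow> \<tau> \<subseteq> \<sigma> \<Longrightarrow> \<tau> \<in> ind_complex E A"
  unfolding ind_complex_def by (auto dest: subset_trans)

lemma ind_down1: "insert v \<tau> \<in> ind_complex E A \<Longrightarrow> \<tau> \<in> ind_complex E A"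
  using ind_down by blast

lemma ind_mono: "A \<subseteq> B \<Longrightarrow> ind_complex E A \<subseteq> ind_complex E B"
  by (auto simp: ind_complex_def)

lemma ind_fin: "finite A \<Longrightarrow> finite (\<Union>(ind_complex E A))"
  by (rule finite_subset[of _ A]) (auto simp: ind_complex_def)

lemma ind_F4: "\<sigma> \<in> ind_complex E S \<Longrightarrow> w \<in> \<sigma> \<Longrightarrow> \<sigma> - {w} \<in> ind_complex E (S - Ncl E w)"
  unfolding ind_complex_def Ncl_def
  by auto

lemma ind_F6: "\<sigma> \<in> ind_complex E S \<Longrightarrow> w \<notin> \<sigma> \<Longrightarrow> \<sigma> \<in> ind_complex E (S - {w})"
  unfolding ind_complex_def by auto

lemma ind_F8: "w \<notin> \<Union>(ind_complex E (S - Ncl E w))"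
  unfolding ind_complex_def Ncl_def by auto

context
  fixes E :: "'a::linorder set set" and V :: "'a set"
  assumes sg: "simple_graph V E"
begin

lemma card_e: "e \<in> E \<Longrightarrow> card e = 2"
  using sg by (auto simp: simple_graph_def)

lemma e_sub: "e \<in> E \<Longrightarrow> e \<subseteq> V"
  using sg by (auto simp: simple_graph_def)

lemma finV: "finite V"
  using sg by (auto simp: simple_graph_def)

lemma finE: "finite E"
  by (rule finite_subset[of _ "Pow V"]) (use e_sub finV in auto)

lemma ind_F5: assumes "\<tau> \<in> ind_complex E (S - Ncl E w)" "w \<in> S"
  shows "insert w \<tau> \<in> ind_complex E S"
proof -
  have ts: "\<tau> \<subseteq> S - Ncl E w" using assms(1) by (simp add: ind_complex_def)
  have "\<not> e \<subseteq> insert w \<tau>" if e: "e \<in> E" for e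
  proof
    assume sub: "e \<subseteq> insert w \<tau>"
    show False
    proof (cases "w \<in> e")
      case False
      then have "e \<subseteq> \<tau>" using sub by blast
      then show False using assms(1) e by (simp add: ind_complex_def)
    next
      case True
      have "card e = 2" using card_e e by blast
      then obtain x y where xy: "e = {x, y}" "x \<noteq> y" by (meson card_2_iff)
      then obtain z where "e = {z, w}" "z \<noteq> w" using True by auto
      then have "z \<in> \<tau>" using sub by auto
      moreover have "z \<in> Ncl E w" using \<open>e = {z,w}\<close> e by (simp add: Ncl_def)
      ultimately show False using ts by blast
    qed
  qed
  then show ?thesis using ts assms(2) by (auto simp: ind_complex_def)
qed

lemma ind_w: "w \<in> S \<Longrightarrow> w \<in> \<Union>(ind_complex E S)"
proof -
  assume "w \<in> S"
  have "{} \<in> ind_complex E (S - Ncl E w)"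
    using card_e by (auto simp: ind_complex_def) (metis card.empty zero_neq_numeral)
  then have "{w} \<in> ind_complex E S" using ind_F5 \<open>w \<in> S\<close> by blast
  then show ?thesis by blast
qed

end


lemma card_ins_less: "finite A \<Longrightarrow> x \<notin> A \<Longrightarrow>
  card {u\<in>insert x A. u < v} = card {u\<in>A. u < v} + (if x < v then 1 else 0)"
proof -
  assume f: "finite A" and x: "x \<notin> A"
  show ?thesis
  proof (cases "x < v")
    case True
    then have "{u\<in>insert x A. u < v} = insert x {u\<in>A. u < v}" by auto
    then show ?thesis using f x True by simp
  next
    case False
    then have "{u\<in>insert x A. u < v} = {u\<in>A. u < v}" by auto
    then show ?thesis using False by simp
  qed
qed

lemma eps_swap:
  fixes v w :: "'a::linorder"
  assumes "finite A" "v \<notin> A" "w \<notin> A" "v \<noteq> w"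
  shows "eps v (insert w A) * eps w (insert v A) = - (eps w A * eps v A :: 'k::field)"
proof -
  have c1: "card {u\<in>insert w A. u < v} = card {u\<in>A. u < v} + (if w < v then 1 else 0)"
    using card_ins_less assms by blast
  have c2: "card {u\<in>insert v A. u < w} = card {u\<in>A. u < w} + (if v < w then 1 else 0)"
    using card_ins_less assms by blast
  have "w < v \<or> v < w" using assms(4) by auto
  then show ?thesis
    unfolding eps_def c1 c2
    by (auto simp: power_add)
qed

context
  fixes E :: "'a::linorder set set" and V :: "'a set"
  assumes sg: "simple_graph V E"
begin

lemma cone_C1:
  assumes wS: "w \<in> S" and fS: "finite S"
    and supp: "\<And>\<sigma>. b \<sigma> \<noteq> 0 \<Longrightarrow> \<sigma> \<in> ind_complex E (S - Ncl E w)"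
    and wt: "w \<notin> \<tau>"
  shows "bdry (ind_complex E S) (cone w b) \<tau> = (b \<tau> :: 'k::field)"
proof (cases "\<tau> \<in> ind_complex E S")
  case True
  let ?K = "ind_complex E S"
  let ?g = "\<lambda>v. if insert v \<tau> \<in> ?K then eps v \<tau> * cone w b (insert v \<tau>) else (0::'k)"
  have fin: "finite (\<Union>?K - \<tau>)" using ind_fin[OF fS] by blast
  have wmem: "w \<in> \<Union>?K - \<tau>" using ind_w[OF sg wS] wt by blast
  have "sum ?g (\<Union>?K - \<tau>) = ?g w + sum ?g (\<Union>?K - \<tau> - {w})"
    by (rule sum.remove[OF fin wmem])
  also have "sum ?g (\<Union>?K - \<tau> - {w}) = 0"
    by (rule sum.neutral) (use wt in \<open>auto simp: cone_def\<close>)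
  also have "?g w = b \<tau>"
  proof (cases "insert w \<tau> \<in> ?K")
    case True
    have "insert w \<tau> - {w} = \<tau>" using wt by auto
    then have "?g w = eps w \<tau> * (eps w \<tau> * b \<tau>)" using True by (simp add: cone_def)
    also have "\<dots> = b \<tau>" by (simp add: mult.assoc[symmetric] eps_sq)
    finally show ?thesis .
  next
    case False
    then have "\<tau> \<notin> ind_complex E (S - Ncl E w)" using ind_F5[OF sg _ wS] by blast
    then show ?thesis using False supp by auto
  qed
  finally show ?thesis using True by (simp add: bdry_alt)
next
  case False
  then have "\<tau> \<notin> ind_complex E (S - Ncl E w)" using ind_mono[of "S - Ncl E w" S E] by blast
  then show ?thesis using False supp by (auto simp: bdry_alt)
qed

lemma cone_C2:
  assumes wS: "w \<in> S" and fS: "finite S"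
    and supp: "\<And>\<sigma>. b \<sigma> \<noteq> 0 \<Longrightarrow> \<sigma> \<in> ind_complex E (S - Ncl E w)"
    and wt: "w \<in> \<tau>"
  shows "bdry (ind_complex E S) (cone w b) \<tau> = - cone w (bdry (ind_complex E (S - Ncl E w)) (b :: _ \<Rightarrow> 'k::field)) \<tau>"
proof -
  let ?K = "ind_complex E S"
  let ?L = "ind_complex E (S - Ncl E w)"
  define \<tau>0 where "\<tau>0 = \<tau> - {w}"
  have t: "\<tau> = insert w \<tau>0" "w \<notin> \<tau>0" using wt by (auto simp: \<tau>0_def)
  show ?thesis
  proof (cases "\<tau> \<in> ?K")
    case False
    then have "\<tau>0 \<notin> ?L" using ind_F5[OF sg _ wS] t by metis
    then show ?thesis using False wt by (simp add: bdry_alt cone_def \<tau>0_def[symmetric])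
  next
    case True
    have t0L: "\<tau>0 \<in> ?L" using ind_F4[OF True wt] by (simp add: \<tau>0_def)
    have ft0: "finite \<tau>0" using ind_sub[OF t0L] fS by (meson finite_Diff finite_subset)
    have finK: "finite (\<Union>?K - \<tau>)" using ind_fin[OF fS] by blast
    have "bdry ?K (cone w b) \<tau> = (\<Sum>v\<in>\<Union>?K - \<tau>. if insert v \<tau> \<in> ?K then eps v \<tau> * cone w b (insert v \<tau>) else 0)"
      using True by (simp add: bdry_alt)
    also have "\<dots> = (\<Sum>v\<in>\<Union>?L - \<tau>0. - eps w \<tau>0 * (if insert v \<tau>0 \<in> ?L then eps v \<tau>0 * b (insert v \<tau>0) else 0))"
    proof (rule sum.mono_neutral_cong_right[OF finK])
      show "\<Union>?L - \<tau>0 \<subseteq> \<Union>?K - \<tau>"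
        using ind_mono[of "S - Ncl E w" S E] ind_F8[of w E S] t by blast
      show "\<forall>i\<in>\<Union>?K - \<tau> - (\<Union>?L - \<tau>0). (if insert i \<tau> \<in> ?K then eps i \<tau> * cone w b (insert i \<tau>) else 0) = 0"
      proof
        fix i assume i: "i \<in> \<Union>?K - \<tau> - (\<Union>?L - \<tau>0)"
        then have "i \<notin> \<Union>?L" "i \<notin> \<tau>" using t by auto
        then have "insert i \<tau>0 \<notin> ?L" by blast
        moreover have "insert i \<tau> - {w} = insert i \<tau>0" using t \<open>i \<notin> \<tau>\<close> by auto
        ultimately show "(if insert i \<tau> \<in> ?K then eps i \<tau> * cone w b (insert i \<tau>) else 0) = 0"
          using supp by (auto simp: cone_def)
      qed
      fix v assume v: "v \<in> \<Union>?L - \<tau>0"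
      then have vw: "v \<noteq> w" using ind_F8[of w E S] by blast
      then have vt: "v \<notin> \<tau>" using v t by auto
      have e1: "insert v \<tau> - {w} = insert v \<tau>0" using t vw by auto
      show "(if insert v \<tau> \<in> ?K then eps v \<tau> * cone w b (insert v \<tau>) else 0) =
         - eps w \<tau>0 * (if insert v \<tau>0 \<in> ?L then eps v \<tau>0 * b (insert v \<tau>0) else 0)"
      proof (cases "b (insert v \<tau>0) = 0")
        case True
        have "cone w b (insert v \<tau>) = eps w (insert v \<tau> - {w}) * b (insert v \<tau> - {w})"
          using wt by (simp add: cone_def)
        then have "cone w b (insert v \<tau>) = 0" unfolding e1 using True by simp
        then show ?thesis using True by simp
      next
        case False
        then have inL: "insert v \<tau>0 \<in> ?L" using supp by blast
        have inK: "insert v \<tau> \<in> ?K" using ind_F5[OF sg inL wS] t by (simp add: insert_commute)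
        have sw: "eps v (insert w \<tau>0) * eps w (insert v \<tau>0) = - (eps w \<tau>0 * eps v \<tau>0 :: 'k)"
          using eps_swap[OF ft0 _ t(2) vw] v by blast
        have "eps v \<tau> * cone w b (insert v \<tau>) = (eps v (insert w \<tau>0) * eps w (insert v \<tau>0)) * b (insert v \<tau>0)"
        proof -
          have "cone w b (insert v \<tau>) = eps w (insert v \<tau> - {w}) * b (insert v \<tau> - {w})"
            using wt by (simp add: cone_def)
          then show ?thesis unfolding e1 t(1)[symmetric] by (simp add: mult.assoc)
        qed
        also have "\<dots> = - eps w \<tau>0 * (eps v \<tau>0 * b (insert v \<tau>0))" using sw by simp
        finally show ?thesis using inK inL by simp
      qed
    qed
    also have "\<dots> = - eps w \<tau>0 * bdry ?L b \<tau>0"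
      using t0L by (simp add: bdry_alt sum_distrib_left)
    also have "\<dots> = - cone w (bdry ?L b) \<tau>"
      using wt by (simp add: cone_def \<tau>0_def)
    finally show ?thesis .
  qed
qed

end


lemma chains_add: "f \<in> chains K d \<Longrightarrow> g \<in> chains K d \<Longrightarrow> (\<lambda>\<sigma>. f \<sigma> + g \<sigma>) \<in> chains K d"
proof -
  assume f: "f \<in> chains K d" and g: "g \<in> chains K d"
  show ?thesis unfolding chains_def
  proof (intro CollectI allI impI)
    fix \<sigma> assume "f \<sigma> + g \<sigma> \<noteq> 0"
    then have "f \<sigma> \<noteq> 0 \<or> g \<sigma> \<noteq> 0" by auto
    then show "\<sigma> \<in> K \<and> int (card \<sigma>) = d + 1" using f g unfolding chains_def by blast
  qed
qed

lemma chains_minus: "f \<in> chains K d \<Longrightarrow> (\<lambda>\<sigma>. - f \<sigma>) \<in> chains K d"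
  unfolding chains_def by auto

lemma chains_diff: "f \<in> chains K d \<Longrightarrow> g \<in> chains K d \<Longrightarrow> (\<lambda>\<sigma>. f \<sigma> - g \<sigma>) \<in> chains K d"
  using chains_add[of f K d "\<lambda>\<sigma>. - g \<sigma>"] chains_minus[of g K d] by simp

lemma chains_mono: "K1 \<subseteq> K2 \<Longrightarrow> chains K1 d \<subseteq> chains K2 d"
  unfolding chains_def by auto

lemma chains_supp: "f \<in> chains K d \<Longrightarrow> f \<sigma> \<noteq> 0 \<Longrightarrow> \<sigma> \<in> K"
  unfolding chains_def by auto

lemma eps_nz: "eps w \<tau> \<noteq> (0::'k::field)"
  unfolding eps_def by simp

context
  fixes E :: "'a::linorder set set" and V :: "'a set"
  assumes sg: "simple_graph V E"
begin

lemma cone_chain: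
  fixes c :: "'a set \<Rightarrow> 'k::field"
  assumes wS: "w \<in> S" and fS: "finite S" and c: "c \<in> chains (ind_complex E (S - Ncl E w)) d"
  shows "cone w c \<in> chains (ind_complex E S) (d + 1)"
  unfolding chains_def
proof (intro CollectI allI impI)
  fix \<sigma> assume nz: "cone w c \<sigma> \<noteq> 0"
  then have w: "w \<in> \<sigma>" and cz: "c (\<sigma> - {w}) \<noteq> 0" by (auto simp: cone_def split: if_splits)
  then have inL: "\<sigma> - {w} \<in> ind_complex E (S - Ncl E w)" and cd: "int (card (\<sigma> - {w})) = d + 1"
    using c unfolding chains_def by auto
  have "insert w (\<sigma> - {w}) \<in> ind_complex E S" using ind_F5[OF sg inL wS] .
  moreover have "insert w (\<sigma> - {w}) = \<sigma>" using w by auto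
  moreover have "finite \<sigma>"
    using calculation ind_sub fS by (metis finite_subset)
  ultimately show "\<sigma> \<in> ind_complex E S \<and> int (card \<sigma>) = d + 1 + 1"
  proof -
    have "card \<sigma> = Suc (card (\<sigma> - {w}))" using card_Suc_Diff1[OF \<open>finite \<sigma>\<close> w] by simp
    then show ?thesis using cd \<open>insert w (\<sigma> - {w}) \<in> ind_complex E S\<close> \<open>insert w (\<sigma> - {w}) = \<sigma>\<close> by simp
  qed
qed

lemma R_S:
  assumes SV: "S \<subseteq> V" and wS: "w \<in> S"
    and nz: "red_homology_nonzero TYPE('k::field) (ind_complex E S) d"
  shows "red_homology_nonzero TYPE('k) (ind_complex E (S - {w})) d \<or>
    (red_homology_nonzero TYPE('k) (ind_complex E (S - Ncl E w)) (d - 1) \<and> (\<exists>x\<in>S. {x, w} \<in> E))"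
proof -
  let ?K = "ind_complex E S"
  let ?K' = "ind_complex E (S - {w})"
  let ?L = "ind_complex E (S - Ncl E w)"
  have fS: "finite S" using SV finV[OF sg] finite_subset by blast
  have fK: "finite (\<Union>?K)" "finite (\<Union>?K')" using ind_fin fS by auto
  have K'K: "?K' \<subseteq> ?K" by (rule ind_mono) blast
  have LK': "?L \<subseteq> ?K'" by (rule ind_mono) (auto simp: Ncl_def)
  have LK: "?L \<subseteq> ?K" using K'K LK' by blast
  have wL: "\<sigma> \<in> ?L \<Longrightarrow> w \<notin> \<sigma>" for \<sigma> using ind_sub[of \<sigma> E "S - Ncl E w"] by (auto simp: Ncl_def)
  have wK': "\<sigma> \<in> ?K' \<Longrightarrow> w \<notin> \<sigma>" for \<sigma> using ind_sub[of \<sigma> E "S - {w}"] by auto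
  obtain z :: "'a set \<Rightarrow> 'k" where zc: "z \<in> chains ?K d" and zb: "bdry ?K z = (\<lambda>_. 0)"
    and znb: "\<forall>b'\<in>chains ?K (d + 1). bdry ?K b' \<noteq> z"
    using nz unfolding red_homology_nonzero_def by blast
  define a where "a \<sigma> = (if w \<in> \<sigma> then 0 else z \<sigma>)" for \<sigma>
  define b where "b \<tau> = (if w \<notin> \<tau> then eps w \<tau> * z (insert w \<tau>) else 0)" for \<tau>
  have zab: "z \<sigma> = a \<sigma> + cone w b \<sigma>" for \<sigma>
  proof (cases "w \<in> \<sigma>")
    case True
    have "cone w b \<sigma> = eps w (\<sigma> - {w}) * (eps w (\<sigma> - {w}) * z (insert w (\<sigma> - {w})))"
      using True by (simp add: cone_def b_def)
    also have "\<dots> = z \<sigma>" using True by (simp add: mult.assoc[symmetric] eps_sq insert_absorb)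
    finally show ?thesis using True by (simp add: a_def)
  qed (simp add: a_def cone_def)
  have zfun: "z = (\<lambda>\<sigma>. a \<sigma> + cone w b \<sigma>)" using zab by (simp add: fun_eq_iff)
  have bch: "b \<in> chains ?L (d - 1)"
    unfolding chains_def
  proof (intro CollectI allI impI)
    fix \<tau> assume "b \<tau> \<noteq> 0"
    then have w: "w \<notin> \<tau>" and zz: "z (insert w \<tau>) \<noteq> 0" by (auto simp: b_def split: if_splits)
    then have inK: "insert w \<tau> \<in> ?K" and cd: "int (card (insert w \<tau>)) = d + 1"
      using zc unfolding chains_def by auto
    have "insert w \<tau> - {w} \<in> ?L" using ind_F4[OF inK insertI1] by simp
    then have inL: "\<tau> \<in> ?L" using w by simp
    have "finite \<tau>" using ind_sub[OF inL] fS by (meson finite_Diff finite_subset)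
    then show "\<tau> \<in> ?L \<and> int (card \<tau>) = d - 1 + 1" using inL cd w by simp
  qed
  have bsupp: "b \<tau> \<noteq> 0 \<Longrightarrow> \<tau> \<in> ?L" for \<tau> using chains_supp[OF bch] .
  have ach: "a \<in> chains ?K' d"
    unfolding chains_def
  proof (intro CollectI allI impI)
    fix \<sigma> assume "a \<sigma> \<noteq> 0"
    then have w: "w \<notin> \<sigma>" and zz: "z \<sigma> \<noteq> 0" by (auto simp: a_def split: if_splits)
    then show "\<sigma> \<in> ?K' \<and> int (card \<sigma>) = d + 1" using zc ind_F6[of \<sigma> E S w] unfolding chains_def by auto
  qed
  have C1b: "bdry ?K (cone w b) \<tau> = b \<tau>" if "w \<notin> \<tau>" for \<tau>
    by (rule cone_C1[OF sg wS fS _ that]) (rule bsupp)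
  have C2b: "bdry ?K (cone w b) \<tau> = - cone w (bdry ?L b) \<tau>" if "w \<in> \<tau>" for \<tau>
    by (rule cone_C2[OF sg wS fS _ that]) (rule bsupp)
  have asupp: "a \<sigma> \<noteq> 0 \<Longrightarrow> \<sigma> \<in> ?K'" for \<sigma> using chains_supp[OF ach] .
  have restr: "bdry ?K f = bdry K1 f"
    if "K1 \<subseteq> ?K" "\<And>v \<tau>. insert v \<tau> \<in> K1 \<Longrightarrow> \<tau> \<in> K1" "\<And>\<sigma>. f \<sigma> \<noteq> 0 \<Longrightarrow> \<sigma> \<in> K1"
    for K1 and f :: "'a set \<Rightarrow> 'k"
    using bdry_restrict[OF that(1) fK(1) that(2,3)] .
  have baK: "bdry ?K a = bdry ?K' a"
    by (rule restr[OF K'K ind_down1 asupp])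
  have ba_w: "bdry ?K a \<tau> = 0" if "w \<in> \<tau>" for \<tau>
  proof -
    have "\<tau> \<notin> ?K'" using wK' that by blast
    then show ?thesis by (simp add: baK bdry_alt)
  qed
  have noW: "bdry ?K a \<tau> + b \<tau> = 0" if "w \<notin> \<tau>" for \<tau>
  proof -
    have "bdry ?K z \<tau> = bdry ?K (\<lambda>\<sigma>. a \<sigma> + cone w b \<sigma>) \<tau>"
      using zfun by simp
    then show ?thesis using zb C1b[OF that] by (simp add: bdry_add)
  qed
  have b_eq: "b \<tau> = - bdry ?K a \<tau>" for \<tau>
  proof (cases "w \<in> \<tau>")
    case True
    then show ?thesis using ba_w by (simp add: b_def)
  next
    case False
    then show ?thesis using noW[OF False] by (simp add: eq_neg_iff_add_eq_0 add.commute)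
  qed
  have Wc: "cone w (bdry ?L b) \<tau> = 0" if "w \<in> \<tau>" for \<tau>
  proof -
    have "bdry ?K z \<tau> = bdry ?K (\<lambda>\<sigma>. a \<sigma> + cone w b \<sigma>) \<tau>"
      using zfun by simp
    then show ?thesis using zb C2b[OF that] ba_w[OF that] by (simp add: bdry_add)
  qed
  show ?thesis
  proof (cases "\<exists>c\<in>chains ?L d. bdry ?L c = b")
    case True
    then obtain c where cch: "c \<in> chains ?L d" and cb: "bdry ?L c = b" by blast
    have csupp: "c \<sigma> \<noteq> 0 \<Longrightarrow> \<sigma> \<in> ?L" for \<sigma> using chains_supp[OF cch] .
    have C1c: "bdry ?K (cone w c) \<tau> = c \<tau>" if "w \<notin> \<tau>" for \<tau>
      by (rule cone_C1[OF sg wS fS _ that]) (rule csupp)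
    have C2c: "bdry ?K (cone w c) \<tau> = - cone w (bdry ?L c) \<tau>" if "w \<in> \<tau>" for \<tau>
      by (rule cone_C2[OF sg wS fS _ that]) (rule csupp)
    define z' where "z' \<sigma> = a \<sigma> + c \<sigma>" for \<sigma>
    have z'ch: "z' \<in> chains ?K' d"
      unfolding z'_def by (rule chains_add[OF ach]) (use cch chains_mono[OF LK'] in blast)
    have bcK: "bdry ?K c = b" using restr[OF LK ind_down1 csupp] cb by simp
    have z'K: "bdry ?K' z' = bdry ?K z'"
      by (rule restr[OF K'K ind_down1 chains_supp[OF z'ch], symmetric])
    have z'cyc: "bdry ?K' z' = (\<lambda>_. 0)"
      unfolding z'K z'_def bdry_add bcK using b_eq by (simp add: fun_eq_iff)
    have z'nb: "\<forall>y\<in>chains ?K' (d + 1). bdry ?K' y \<noteq> z'"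
    proof (intro ballI notI)
      fix y assume ych: "y \<in> chains ?K' (d + 1)" and yb: "bdry ?K' y = z'"
      have yK: "bdry ?K y = z'" using restr[OF K'K ind_down1 chains_supp[OF ych]] yb by simp
      define b' where "b' \<sigma> = y \<sigma> - cone w c \<sigma>" for \<sigma>
      have b'ch: "b' \<in> chains ?K (d + 1)"
        unfolding b'_def by (rule chains_diff) (use ych chains_mono[OF K'K] cone_chain[OF wS fS cch] in blast)+
      have bb': "bdry ?K b' \<tau> = bdry ?K y \<tau> - bdry ?K (cone w c) \<tau>" for \<tau>
        unfolding b'_def[abs_def] bdry_diff by simp
      have "bdry ?K b' = z"
      proof (rule ext)
        fix \<tau>
        show "bdry ?K b' \<tau> = z \<tau>"
        proof (cases "w \<in> \<tau>")
          case True
          have "a \<tau> = 0" "c \<tau> = 0" using True csupp wL by (auto simp: a_def)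
          then show ?thesis using True C2c[OF True] zab[of \<tau>]
            by (simp add: bb' yK z'_def cb)
        next
          case False
          have "cone w b \<tau> = 0" using False by (simp add: cone_def)
          then show ?thesis using False C1c[OF False] zab[of \<tau>]
            by (simp add: bb' yK z'_def)
        qed
      qed
      then show False using znb b'ch by blast
    qed
    show ?thesis using z'ch z'cyc z'nb unfolding red_homology_nonzero_def by blast
  next
    case False
    have bcyc: "bdry ?L b = (\<lambda>_. 0)"
    proof (rule ext)
      fix \<tau>
      show "bdry ?L b \<tau> = 0"
      proof (cases "w \<in> \<tau>")
        case True
        then have "\<tau> \<notin> ?L" using wL by blast
        then show ?thesis by (simp add: bdry_alt)
      next
        case False
        have "cone w (bdry ?L b) (insert w \<tau>) = 0" using Wc by simp
        then have "eps w \<tau> * bdry ?L b \<tau> = 0" using False by (simp add: cone_def)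
        then show ?thesis by (metis eps_nz mult_eq_0_iff)
      qed
    qed
    have nzL: "red_homology_nonzero TYPE('k) ?L (d - 1)"
    proof -
      have "\<forall>c\<in>chains ?L (d - 1 + 1). bdry ?L c \<noteq> b" using False by simp
      then show ?thesis unfolding red_homology_nonzero_def using bch bcyc by blast
    qed
    have "\<exists>x\<in>S. {x, w} \<in> E"
    proof (rule ccontr)
      assume "\<not> (\<exists>x\<in>S. {x, w} \<in> E)"
      then have "S - Ncl E w = S - {w}" by (auto simp: Ncl_def)
      then have LK'eq: "?L = ?K'" by simp
      have "(\<lambda>\<sigma>. - a \<sigma>) \<in> chains ?L d" using chains_minus[OF ach] LK'eq by simp
      moreover have "bdry ?L (\<lambda>\<sigma>. - a \<sigma>) = b"
        unfolding LK'eq bdry_minus baK[symmetric] using b_eq by (simp add: fun_eq_iff)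
      ultimately show False using False by blast
    qed
    then show ?thesis using nzL by blast
  qed
qed

end


definition Pp :: "'k::field itself \<Rightarrow> 'a::linorder set set \<Rightarrow> 'a set \<Rightarrow> nat \<Rightarrow> bool" where
  "Pp k E X j = (\<exists>S\<subseteq>X. red_homology_nonzero k (ind_complex E S) (int j - 1))"

definition EW :: "'a set set \<Rightarrow> 'a set \<Rightarrow> 'a set set" where
  "EW E W = {e\<in>E. e \<subseteq> W}"

definition imW :: "'a set set \<Rightarrow> 'a set \<Rightarrow> nat" where
  "imW E W = induced_matching_number (EW E W)"

lemma nz_face:
  assumes "red_homology_nonzero (k::'k::field itself) K d"
  shows "\<exists>\<sigma>\<in>K. int (card \<sigma>) = d + 1"
proof -
  obtain z :: "'a set \<Rightarrow> 'k" where zc: "z \<in> chains K d"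
    and znb: "\<forall>b'\<in>chains K (d + 1). bdry K b' \<noteq> z"
    using assms unfolding red_homology_nonzero_def by blast
  have "(\<lambda>_. 0::'k) \<in> chains K (d + 1)" by (simp add: chains_def)
  have "z \<noteq> (\<lambda>_. 0)"
  proof
    assume "z = (\<lambda>_. 0)"
    then have "bdry K (\<lambda>_. 0::'k) = z" by (simp add: bdry_zero)
    with znb \<open>(\<lambda>_. 0::'k) \<in> chains K (d + 1)\<close> show False by blast
  qed
  then obtain \<sigma> where "z \<sigma> \<noteq> 0" by auto
  then show ?thesis using zc unfolding chains_def by blast
qed

lemma Pp_mono: "X \<subseteq> Y \<Longrightarrow> Pp k E X j \<Longrightarrow> Pp k E Y j"
  unfolding Pp_def by blast

lemma Pp_empty: "Pp (k::'k::field itself) E {} j \<Longrightarrow> j = 0"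
proof -
  assume "Pp k E {} j"
  then have "red_homology_nonzero k (ind_complex E {}) (int j - 1)" unfolding Pp_def by auto
  then obtain \<sigma> where "\<sigma> \<in> ind_complex E {}" "int (card \<sigma>) = int j - 1 + 1"
    using nz_face by blast
  then show "j = 0" by (simp add: ind_complex_def)
qed

lemma tree:
  fixes k :: "'k::field itself"
  assumes RP: "\<And>X j w. X \<subseteq> V \<Longrightarrow> Pp k E X j \<Longrightarrow> Pp k E (X - {w}) j \<or>
      (1 \<le> j \<and> Pp k E (X - Ncl E w) (j - 1) \<and> (\<exists>x\<in>X. {x, w} \<in> E))"
  shows "X \<subseteq> V \<Longrightarrow> Pp k E X j \<Longrightarrow> Pp k E (X - set ws) j \<or>
    (\<exists>w\<in>set ws. \<exists>Y c. Y \<subseteq> X - Ncl E w - set ws \<and> 1 \<le> c \<and> c \<le> length ws \<and> c \<le> j \<and> Pp k E Y (j - c))"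
proof (induction ws arbitrary: X j)
  case Nil
  then show ?case by simp
next
  case (Cons w ws)
  from RP[OF Cons.prems] show ?case
  proof
    assume A: "Pp k E (X - {w}) j"
    have "X - {w} \<subseteq> V" using Cons.prems by blast
    from Cons.IH[OF this A] show ?case
    proof
      assume "Pp k E (X - {w} - set ws) j"
      then show ?case by (simp add: Diff_insert2[symmetric] insert_commute)
    next
      assume "\<exists>w'\<in>set ws. \<exists>Y c. Y \<subseteq> X - {w} - Ncl E w' - set ws \<and> 1 \<le> c \<and> c \<le> length ws \<and> c \<le> j \<and> Pp k E Y (j - c)"
      then obtain w' Y c where "w' \<in> set ws" "Y \<subseteq> X - {w} - Ncl E w' - set ws" "1 \<le> c" "c \<le> length ws" "c \<le> j" "Pp k E Y (j - c)"
        by blast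
      then show ?case
        by (intro disjI2 bexI[of _ w'] exI[of _ Y] exI[of _ c]) auto
    qed
  next
    assume B: "1 \<le> j \<and> Pp k E (X - Ncl E w) (j - 1) \<and> (\<exists>x\<in>X. {x, w} \<in> E)"
    have "X - Ncl E w \<subseteq> V" using Cons.prems by blast
    moreover have B2: "Pp k E (X - Ncl E w) (j - 1)" using B by blast
    ultimately have IH2: "Pp k E (X - Ncl E w - set ws) (j - 1) \<or>
      (\<exists>w'\<in>set ws. \<exists>Y c. Y \<subseteq> X - Ncl E w - Ncl E w' - set ws \<and> 1 \<le> c \<and> c \<le> length ws \<and> c \<le> j - 1 \<and> Pp k E Y (j - 1 - c))"
      by (rule Cons.IH)
    from IH2 show ?case
    proof
      assume "Pp k E (X - Ncl E w - set ws) (j - 1)"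
      moreover have "X - Ncl E w - set ws \<subseteq> X - Ncl E w - set (w # ws)"
        by (auto simp: Ncl_def)
      ultimately show ?case using B
        by (intro disjI2 bexI[of _ w] exI[of _ "X - Ncl E w - set ws"] exI[of _ 1]) auto
    next
      assume "\<exists>w'\<in>set ws. \<exists>Y c. Y \<subseteq> X - Ncl E w - Ncl E w' - set ws \<and> 1 \<le> c \<and> c \<le> length ws \<and> c \<le> j - 1 \<and> Pp k E Y (j - 1 - c)"
      then obtain w' Y c where h: "w' \<in> set ws" "Y \<subseteq> X - Ncl E w - Ncl E w' - set ws" "1 \<le> c" "c \<le> length ws" "c \<le> j - 1" "Pp k E Y (j - 1 - c)"
        by blast
      have "Y \<subseteq> X - Ncl E w' - set (w # ws)" using h(2) by (auto simp: Ncl_def)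
      moreover have "j - (c + 1) = j - 1 - c" by simp
      ultimately show ?case using h B
        by (intro disjI2 bexI[of _ w'] exI[of _ Y] exI[of _ "c + 1"]) auto
    qed
  qed
qed

context
  fixes E :: "'a::linorder set set" and V :: "'a set"
  assumes sg: "simple_graph V E"
begin

lemma R_P:
  assumes XV: "X \<subseteq> V" and P: "Pp TYPE('k::field) E X j"
  shows "Pp TYPE('k) E (X - {w}) j \<or> (1 \<le> j \<and> Pp TYPE('k) E (X - Ncl E w) (j - 1) \<and> (\<exists>x\<in>X. {x, w} \<in> E))"
proof -
  obtain S where SX: "S \<subseteq> X" and nz: "red_homology_nonzero TYPE('k) (ind_complex E S) (int j - 1)"
    using P unfolding Pp_def by blast
  show ?thesis
  proof (cases "w \<in> S")
    case False
    then have "S \<subseteq> X - {w}" using SX by blast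
    then show ?thesis using nz unfolding Pp_def by blast
  next
    case True
    note nz' = nz
    have SV: "S \<subseteq> V" using SX XV by blast
    from R_S[OF sg SV True nz']
    show ?thesis
    proof (elim disjE conjE)
      assume "red_homology_nonzero TYPE('k) (ind_complex E (S - {w})) (int j - 1)"
      moreover have "S - {w} \<subseteq> X - {w}" using SX by blast
      ultimately show ?thesis unfolding Pp_def by blast
    next
      assume h: "red_homology_nonzero TYPE('k) (ind_complex E (S - Ncl E w)) (int j - 1 - 1)"
        and x: "\<exists>x\<in>S. {x, w} \<in> E"
      obtain \<sigma> where "\<sigma> \<in> ind_complex E (S - Ncl E w)" "int (card \<sigma>) = int j - 1 - 1 + 1"
        using nz_face[OF h] by blast
      then have j1: "1 \<le> j" by linarith
      then have "int (j - 1) - 1 = int j - 1 - 1" by simp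
      then have "red_homology_nonzero TYPE('k) (ind_complex E (S - Ncl E w)) (int (j - 1) - 1)"
        using h by simp
      moreover have "S - Ncl E w \<subseteq> X - Ncl E w" using SX by blast
      ultimately show ?thesis using j1 x SX unfolding Pp_def by blast
    qed
  qed
qed

end


context
  fixes E :: "'a::linorder set set" and V :: "'a set"
  assumes sg: "simple_graph V E"
begin

lemma fin_IM: "finite {M. induced_matching (EW E W) M}"
proof (rule finite_subset[of _ "Pow E"])
  show "{M. induced_matching (EW E W) M} \<subseteq> Pow E"
    by (auto simp: induced_matching_def EW_def)
  show "finite (Pow E)" using finE[OF sg] by simp
qed

lemma empty_IM: "induced_matching (EW E W) {}"
  unfolding induced_matching_def EW_def using card_e[OF sg] by fastforce

lemma im_exists: "\<exists>M. induced_matching (EW E W) M \<and> card M = imW E W"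
proof -
  have "imW E W \<in> card ` {M. induced_matching (EW E W) M}"
    unfolding imW_def induced_matching_number_def
    by (rule Max_in) (use fin_IM empty_IM in auto)
  then show ?thesis by auto
qed

lemma im_ge: "induced_matching (EW E W) M \<Longrightarrow> card M \<le> imW E W"
  unfolding imW_def induced_matching_number_def
  by (rule Max_ge) (use fin_IM in auto)

lemma im_mono: assumes "A \<subseteq> B" shows "imW E A \<le> imW E B"
proof -
  obtain M where M: "induced_matching (EW E A) M" "card M = imW E A" using im_exists by blast
  have MA: "M \<subseteq> EW E A" and dj: "\<forall>e\<in>M. \<forall>f\<in>M. e \<noteq> f \<longrightarrow> e \<inter> f = {}"
    and ind: "\<forall>e\<in>EW E A. e \<subseteq> \<Union>M \<longrightarrow> e \<in> M"
    using M(1) unfolding induced_matching_def by auto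
  have UA: "\<Union>M \<subseteq> A" using MA by (auto simp: EW_def)
  have "induced_matching (EW E B) M"
    unfolding induced_matching_def
  proof (intro conjI)
    show "M \<subseteq> EW E B" using MA assms by (auto simp: EW_def)
    show "\<forall>e\<in>M. \<forall>f\<in>M. e \<noteq> f \<longrightarrow> e \<inter> f = {}" by (rule dj)
    show "\<forall>e\<in>EW E B. e \<subseteq> \<Union>M \<longrightarrow> e \<in> M"
    proof (intro ballI impI)
      fix e assume "e \<in> EW E B" "e \<subseteq> \<Union>M"
      then have "e \<in> EW E A" using UA by (auto simp: EW_def)
      then show "e \<in> M" using ind \<open>e \<subseteq> \<Union>M\<close> by blast
    qed
  qed
  then have "card M \<le> imW E B" by (rule im_ge)
  then show ?thesis using M(2) by simp
qed

lemma imW_V: "imW E V = induced_matching_number E"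
proof -
  have "EW E V = E" using e_sub[OF sg] by (auto simp: EW_def)
  then show ?thesis by (simp add: imW_def)
qed

lemma im_extend:
  assumes uW: "u \<in> W" and wW: "w \<in> W" and uw: "{u, w} \<in> E" and YW: "Y \<subseteq> W"
    and Yu: "Y \<inter> Ncl E u = {}" and Yw: "Y \<inter> Ncl E w = {}"
  shows "imW E Y + 1 \<le> imW E W"
proof -
  obtain M' where M': "induced_matching (EW E Y) M'" "card M' = imW E Y" using im_exists by blast
  have M'sub: "\<And>e. e \<in> M' \<Longrightarrow> e \<in> E \<and> e \<subseteq> Y" using M'(1) by (auto simp: induced_matching_def EW_def)
  have uY: "u \<notin> Y" using Yu by (auto simp: Ncl_def)
  have wY: "w \<notin> Y" using Yw by (auto simp: Ncl_def)
  have nM: "{u, w} \<notin> M'" using M'sub uY by blast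
  have finM': "finite M'" using M'sub finE[OF sg] by (meson finite_subset subsetI)
  define M where "M = insert {u, w} M'"
  have cM: "card M = card M' + 1" using nM finM' by (simp add: M_def)
  have "induced_matching (EW E W) M"
    unfolding induced_matching_def
  proof (intro conjI ballI impI)
    show "M \<subseteq> EW E W" using M'sub uw uW wW YW by (auto simp: M_def EW_def)
  next
    fix e f assume e: "e \<in> M" and f: "f \<in> M" and ef: "e \<noteq> f"
    show "e \<inter> f = {}"
    proof (cases "e \<in> M' \<and> f \<in> M'")
      case True
      then show ?thesis using M'(1) ef by (auto simp: induced_matching_def)
    next
      case False
      then have "e = {u, w} \<and> f \<in> M' \<or> f = {u, w} \<and> e \<in> M'" using e f ef by (auto simp: M_def)
      then show ?thesis using M'sub uY wY by blast
    qed
  next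
    fix e assume eE: "e \<in> EW E W" and eU: "e \<subseteq> \<Union>M"
    have ce: "card e = 2" using eE card_e[OF sg] by (auto simp: EW_def)
    then obtain p q where pq: "e = {p, q}" "p \<noteq> q" by (meson card_2_iff)
    have eE': "e \<in> E" using eE by (auto simp: EW_def)
    have UM: "\<Union>M = {u, w} \<union> \<Union>M'" by (auto simp: M_def)
    have UY: "\<Union>M' \<subseteq> Y" using M'sub by blast
    show "e \<in> M"
    proof (cases "e \<subseteq> \<Union>M'")
      case True
      then have "e \<in> EW E Y" using eE' UY by (auto simp: EW_def)
      then have "e \<in> M'" using M'(1) True by (auto simp: induced_matching_def)
      then show ?thesis by (simp add: M_def)
    next
      case False
      show ?thesis
      proof (cases "e \<subseteq> {u, w}")
        case True
        have "u \<noteq> w" using uw card_e[OF sg] by fastforce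
        then have "e = {u, w}" using True pq by auto
        then show ?thesis by (simp add: M_def)
      next
        case nsub: False
        have "\<exists>a\<in>{u, w}. \<exists>b\<in>Y. e = {a, b}"
          using False nsub eU UM UY pq by auto
        then obtain a b where ab: "a \<in> {u, w}" "b \<in> Y" "e = {a, b}" by blast
        have "{b, a} \<in> E" using eE' ab(3) by (simp add: insert_commute)
        then have "b \<in> Ncl E a" by (simp add: Ncl_def)
        then show ?thesis using ab Yu Yw by auto
      qed
    qed
  qed
  then have "card M \<le> imW E W" by (rule im_ge)
  then show ?thesis using cM M'(2) by simp
qed

end


context
  fixes E :: "'a::linorder set set" and V :: "'a set"
  assumes sg: "simple_graph V E"
begin

lemma deg_bound: assumes "u \<in> V" shows "card {x\<in>W. {x, u} \<in> E} \<le> max_degree V E"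
proof -
  have sub: "{x. {x, u} \<in> E} \<subseteq> V" using e_sub[OF sg] by blast
  have "card {x\<in>W. {x, u} \<in> E} \<le> card {x. {x, u} \<in> E}"
    by (rule card_mono) (use sub finV[OF sg] finite_subset in auto)
  also have "\<dots> = degree E u" by (simp add: degree_def)
  also have "\<dots> \<le> Max (degree E ` V)" by (rule Max_ge) (use finV[OF sg] assms in auto)
  also have "\<dots> = max_degree V E" using assms by (auto simp: max_degree_def)
  finally show ?thesis .
qed

lemma main: "W \<subseteq> V \<Longrightarrow> Pp TYPE('k::field) E W j \<Longrightarrow> j \<le> max_degree V E * imW E W"
proof (induction "card W" arbitrary: W j rule: less_induct)
  case less
  let ?D = "max_degree V E"
  have fW: "finite W" using less.prems(1) finV[OF sg] finite_subset by blast
  show ?case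
  proof (cases "\<exists>u\<in>W. \<exists>x\<in>W. {x, u} \<in> E")
    case True
    then obtain u x where uW: "u \<in> W" and xW: "x \<in> W" and xu: "{x, u} \<in> E" by blast
    define NU where "NU = {x\<in>W. {x, u} \<in> E}"
    define ws where "ws = sorted_list_of_set NU"
    have fNU: "finite NU" using fW by (simp add: NU_def)
    have sws: "set ws = NU" using fNU by (simp add: ws_def)
    have lws: "length ws \<le> ?D"
      using deg_bound[of u W] uW less.prems(1) fNU by (auto simp: ws_def NU_def)
    have RP: "\<And>X j w. X \<subseteq> V \<Longrightarrow> Pp TYPE('k) E X j \<Longrightarrow> Pp TYPE('k) E (X - {w}) j \<or>
      (1 \<le> j \<and> Pp TYPE('k) E (X - Ncl E w) (j - 1) \<and> (\<exists>x\<in>X. {x, w} \<in> E))"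
      by (rule R_P[OF sg])
    from tree[OF RP less.prems, of ws] show ?thesis
    proof
      assume A: "Pp TYPE('k) E (W - set ws) j"
      have lt: "card (W - NU) < card W"
        using xW xu fW by (intro psubset_card_mono) (auto simp: NU_def)
      have "j \<le> ?D * imW E (W - NU)"
        using less.hyps[OF lt, of j] A less.prems(1) sws by auto
      also have "\<dots> \<le> ?D * imW E W" by (intro mult_le_mono2 im_mono[OF sg]) blast
      finally show ?thesis .
    next
      assume "\<exists>w\<in>set ws. \<exists>Y c. Y \<subseteq> W - Ncl E w - set ws \<and> 1 \<le> c \<and> c \<le> length ws \<and> c \<le> j \<and> Pp TYPE('k) E Y (j - c)"
      then obtain w Y c where w: "w \<in> NU" and Y: "Y \<subseteq> W - Ncl E w - NU" and c: "1 \<le> c" "c \<le> length ws" "c \<le> j"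
        and PY: "Pp TYPE('k) E Y (j - c)" using sws by blast
      have wW: "w \<in> W" and wu: "{w, u} \<in> E" using w by (auto simp: NU_def)
      have uw: "{u, w} \<in> E" using wu by (simp add: insert_commute)
      have uN: "u \<in> Ncl E w" using uw by (simp add: Ncl_def)
      have lt: "card Y < card W"
        using Y uW uN fW by (intro psubset_card_mono) auto
      have IH: "j - c \<le> ?D * imW E Y"
        using less.hyps[OF lt, of "j - c"] PY Y less.prems(1) by auto
      have Yu: "Y \<inter> Ncl E u = {}" using Y uN by (auto simp: Ncl_def NU_def)
      have Yw: "Y \<inter> Ncl E w = {}" using Y by auto
      have ext: "imW E Y + 1 \<le> imW E W"
        by (rule im_extend[OF sg uW wW uw _ Yu Yw]) (use Y in blast)
      have "j \<le> c + ?D * imW E Y" using IH by linarith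
      also have "\<dots> \<le> ?D + ?D * imW E Y" using c lws by linarith
      also have "\<dots> = ?D * (imW E Y + 1)" by simp
      also have "\<dots> \<le> ?D * imW E W" using ext by (intro mult_le_mono2)
      finally show ?thesis .
    qed
  next
    case False
    show ?thesis
    proof (cases "W = {}")
      case True
      then show ?thesis using Pp_empty less.prems(2) by blast
    next
      case ne: False
      then obtain w where wW: "w \<in> W" by blast
      from R_P[OF sg less.prems, of w] False wW
      have A: "Pp TYPE('k) E (W - {w}) j" by blast
      have lt: "card (W - {w}) < card W" using wW fW by (meson card_Diff1_less)
      have "j \<le> ?D * imW E (W - {w})"
        using less.hyps[OF lt, of j] A less.prems(1) by auto
      also have "\<dots> \<le> ?D * imW E W" by (intro mult_le_mono2 im_mono[OF sg]) blast
      finally show ?thesis .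
    qed
  qed
qed

lemma nz_empty: "red_homology_nonzero TYPE('k::field) (ind_complex E {}) (-1)"
proof -
  let ?K = "ind_complex E {}"
  have K: "?K = {{}}" using card_e[OF sg] by (auto simp: ind_complex_def) (metis card.empty zero_neq_numeral)
  define z :: "'a set \<Rightarrow> 'k" where "z \<sigma> = (if \<sigma> = {} then 1 else 0)" for \<sigma>
  have zc: "z \<in> chains ?K (-1)" using K by (auto simp: chains_def z_def)
  have bd: "bdry ?K f \<tau> = 0" for f :: "'a set \<Rightarrow> 'k" and \<tau>
    using K by (simp add: bdry_alt)
  have "bdry ?K z = (\<lambda>_. 0)" using bd by auto
  moreover have "\<forall>b\<in>chains ?K (-1 + 1). bdry ?K b \<noteq> z"
  proof
    fix b :: "'a set \<Rightarrow> 'k" assume "b \<in> chains ?K (-1 + 1)"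
    have "bdry ?K b {} \<noteq> z {}" using bd by (simp add: z_def)
    then show "bdry ?K b \<noteq> z" by metis
  qed
  ultimately show ?thesis unfolding red_homology_nonzero_def using zc by blast
qed

end

theorem mainTheorem10:
  fixes V :: "'a::linorder set" and E :: "'a set set"
  assumes "simple_graph V E"
  shows "reg TYPE('k::field) V E \<le> max_degree V E * induced_matching_number E"
proof -
  let ?A = "{j. \<exists>S\<subseteq>V. red_homology_nonzero TYPE('k) (ind_complex E S) (int j - 1)}"
  have bound: "j \<le> max_degree V E * induced_matching_number E" if "j \<in> ?A" for j
    using main[OF assms _, of V j] that imW_V[OF assms] by (simp add: Pp_def)
  have fin: "finite ?A" by (rule finite_subset[of _ "{..max_degree V E * induced_matching_number E}"]) (use bound in auto)
  have "0 \<in> ?A" using nz_empty[OF assms] by auto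
  then have ne: "?A \<noteq> {}" by blast
  show ?thesis unfolding reg_def using Max_le_iff[OF fin ne] bound by blast
qed


end
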